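(* Let $a,b,c,d\in R_\omega-\mathbb{F}_q$ be such that $ad-bc=1$ and $|a|_\omega\ge|b|_\omega$. Then $|c|_\omega\ge|d|_\omega$.
   Context: $\mathbb{F}_q$ is a finite field of order $q$, $K$ is the function field of a geometrically connected smooth projective curve $\mathbf C$ over $\mathbb{F}_q$, $\omega$ is a normalized discrete valuation of $K$ (corresponding to a closed point of $\mathbf C$), $K_\omega$ is the completion of $K$ at $\omega$, $q_\omega$ is the order of the residue field of $\omega$, and $|x|_\omega=q_\omega^{-\omega(x)}$. $R_\omega$ is the ring of elements of $K$ whose only poles are at the closed point $\omega$ (the affine coordinate ring of $\mathbf C-\{\omega\}$). *)

theory Defs
  imports Complex_Main "HOL-Computational_Algebra.Polynomial"
begin

text \<open>The function field K is the whole (field) type 'k; the constant field F_q is a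
subset F of it.\<close>

definition subfield :: "'k::field set \<Rightarrow> bool" where
  "subfield F \<longleftrightarrow> 0 \<in> F \<and> 1 \<in> F \<and>
     (\<forall>x\<in>F. \<forall>y\<in>F. x + y \<in> F \<and> x * y \<in> F) \<and> (\<forall>x\<in>F. - x \<in> F) \<and>
     (\<forall>x\<in>F. x \<noteq> 0 \<longrightarrow> inverse x \<in> F)"

definition algebraic_over :: "'k::field set \<Rightarrow> 'k \<Rightarrow> bool" where
  "algebraic_over F x \<longleftrightarrow> (\<exists>p. p \<noteq> 0 \<and> (\<forall>i. coeff p i \<in> F) \<and> poly p x = 0)"

definition rat_fun_field :: "'k::field set \<Rightarrow> 'k \<Rightarrow> 'k set" where
  "rat_fun_field F t = {poly p t / poly r t | p r.
      (\<forall>i. coeff p i \<in> F) \<and> (\<forall>i. coeff r i \<in> F) \<and> r \<noteq> 0}"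

definition finite_dim_over :: "'k::field set \<Rightarrow> bool" where
  "finite_dim_over L \<longleftrightarrow> (\<exists>B. finite B \<and>
      (\<forall>x. \<exists>c. (\<forall>b\<in>B. c b \<in> L) \<and> x = (\<Sum>b\<in>B. c b * b)))"

text \<open>K is the function field of a geometrically connected smooth projective curve over
  F_q: a finite extension of a rational function field F_q(t), with F_q algebraically
  closed in K (exact constant field F_q), and card F_q = q.\<close>
definition function_field_over :: "'k::field set \<Rightarrow> nat \<Rightarrow> bool" where
  "function_field_over F q \<longleftrightarrow> subfield F \<and> finite F \<and> card F = q \<and>
     (\<exists>t. \<not> algebraic_over F t \<and> finite_dim_over (rat_fun_field F t)) \<and>
     (\<forall>x. algebraic_over F x \<longrightarrow> x \<in> F)"

text \<open>Normalized discrete valuation of K trivial on F_q (= closed point of the curve).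
  Convention: the value at 0 is recorded as 0 (it is never used).\<close>
definition normalized_dvaluation :: "'k::field set \<Rightarrow> ('k \<Rightarrow> int) \<Rightarrow> bool" where
  "normalized_dvaluation F v \<longleftrightarrow> v 0 = 0 \<and>
     (\<forall>x y. x \<noteq> 0 \<longrightarrow> y \<noteq> 0 \<longrightarrow> v (x * y) = v x + v y) \<and>
     (\<forall>x y. x \<noteq> 0 \<longrightarrow> y \<noteq> 0 \<longrightarrow> x + y \<noteq> 0 \<longrightarrow> v (x + y) \<ge> min (v x) (v y)) \<and>
     surj v \<and> (\<forall>c\<in>F. c \<noteq> 0 \<longrightarrow> v c = 0)"

definition R_omega :: "'k::field set \<Rightarrow> ('k \<Rightarrow> int) \<Rightarrow> 'k set" where
  "R_omega F \<omega> = {x. \<forall>\<nu>. normalized_dvaluation F \<nu> \<and> \<nu> \<noteq> \<omega> \<longrightarrow> \<nu> x \<ge> 0}"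

definition val_ring :: "('k::field \<Rightarrow> int) \<Rightarrow> 'k set" where
  "val_ring \<omega> = {x. x = 0 \<or> \<omega> x \<ge> 0}"

definition residue_rel :: "('k::field \<Rightarrow> int) \<Rightarrow> ('k \<times> 'k) set" where
  "residue_rel \<omega> = {(x, y). x \<in> val_ring \<omega> \<and> y \<in> val_ring \<omega> \<and> (x - y = 0 \<or> \<omega> (x - y) > 0)}"

definition q_omega :: "('k::field \<Rightarrow> int) \<Rightarrow> nat" where
  "q_omega \<omega> = card (val_ring \<omega> // residue_rel \<omega>)"

definition absv :: "('k::field \<Rightarrow> int) \<Rightarrow> 'k \<Rightarrow> real" where
  "absv \<omega> x = (if x = 0 then 0 else real (q_omega \<omega>) powr (- real_of_int (\<omega> x)))"

end

theory Submission
  imports Defs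
begin
definition subring :: "'k::field set \<Rightarrow> bool" where
  "subring S \<longleftrightarrow> 0 \<in> S \<and> 1 \<in> S \<and> (\<forall>x\<in>S. \<forall>y\<in>S. x + y \<in> S \<and> x * y \<in> S) \<and> (\<forall>x\<in>S. - x \<in> S)"

definition adjoin :: "'k::field set \<Rightarrow> 'k \<Rightarrow> 'k set" where
  "adjoin S z = {poly p z | p. \<forall>i. coeff p i \<in> S}"

lemma subringD:
  assumes "subring S"
  shows "0 \<in> S" "1 \<in> S" "x \<in> S \<Longrightarrow> y \<in> S \<Longrightarrow> x + y \<in> S"
    "x \<in> S \<Longrightarrow> y \<in> S \<Longrightarrow> x * y \<in> S" "x \<in> S \<Longrightarrow> - x \<in> S"
    "x \<in> S \<Longrightarrow> y \<in> S \<Longrightarrow> x - y \<in> S"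
proof -
  have A: "0 \<in> S" "1 \<in> S" "\<And>x y. x \<in> S \<Longrightarrow> y \<in> S \<Longrightarrow> x + y \<in> S"
    "\<And>x y. x \<in> S \<Longrightarrow> y \<in> S \<Longrightarrow> x * y \<in> S" "\<And>x. x \<in> S \<Longrightarrow> - x \<in> S"
    using assms unfolding subring_def by blast+
  show "0 \<in> S" "1 \<in> S" "x \<in> S \<Longrightarrow> y \<in> S \<Longrightarrow> x + y \<in> S"
    "x \<in> S \<Longrightarrow> y \<in> S \<Longrightarrow> x * y \<in> S" "x \<in> S \<Longrightarrow> - x \<in> S"
    using A by auto
  show "x \<in> S \<Longrightarrow> y \<in> S \<Longrightarrow> x - y \<in> S" using A(3,5) by (metis diff_conv_add_uminus)
qed

lemma subring_sum:
  assumes "subring S" "\<And>i. i \<in> A \<Longrightarrow> f i \<in> S"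
  shows "sum f A \<in> S"
proof (cases "finite A")
  case True
  then show ?thesis using assms(2)
    by (induction A rule: finite_induct) (auto intro: subringD[OF assms(1)])
next
  case False
  then show ?thesis using subringD(1)[OF assms(1)] by simp
qed

lemma subring_power:
  assumes "subring S" "x \<in> S" shows "x ^ n \<in> S"
  by (induction n) (auto intro: subringD[OF assms(1)] assms(2))

lemma subfield_subring: "subfield F \<Longrightarrow> subring F"
  unfolding subfield_def subring_def by auto

lemma coeffs_add: "subring S \<Longrightarrow> \<forall>i. coeff p i \<in> S \<Longrightarrow> \<forall>i. coeff q i \<in> S \<Longrightarrow> \<forall>i. coeff (p + q) i \<in> S"
  by (auto intro: subringD)

lemma coeffs_diff: "subring S \<Longrightarrow> \<forall>i. coeff p i \<in> S \<Longrightarrow> \<forall>i. coeff q i \<in> S \<Longrightarrow> \<forall>i. coeff (p - q) i \<in> S"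
  by (auto intro: subringD)

lemma coeffs_uminus: "subring S \<Longrightarrow> \<forall>i. coeff p i \<in> S \<Longrightarrow> \<forall>i. coeff (- p) i \<in> S"
  by (auto intro: subringD)

lemma coeffs_mult: "subring S \<Longrightarrow> \<forall>i. coeff p i \<in> S \<Longrightarrow> \<forall>i. coeff q i \<in> S \<Longrightarrow> \<forall>i. coeff (p * q) i \<in> S"
  by (auto simp: coeff_mult intro!: subring_sum subringD)

lemma coeffs_smult: "subring S \<Longrightarrow> c \<in> S \<Longrightarrow> \<forall>i. coeff q i \<in> S \<Longrightarrow> \<forall>i. coeff (smult c q) i \<in> S"
  by (auto intro: subringD)

lemma coeffs_monom: "subring S \<Longrightarrow> c \<in> S \<Longrightarrow> \<forall>i. coeff (monom c n) i \<in> S"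
  by (auto simp: coeff_monom intro: subringD)

lemma coeffs_const: "subring S \<Longrightarrow> c \<in> S \<Longrightarrow> \<forall>i. coeff [:c:] i \<in> S"
  by (auto simp: coeff_pCons split: nat.splits intro: subringD)

lemma coeffs_pCons: "\<forall>i. coeff (pCons a p) i \<in> S \<Longrightarrow> a \<in> S \<and> (\<forall>i. coeff p i \<in> S)"
  by (metis coeff_pCons_0 coeff_pCons_Suc)

lemma poly_in_subring:
  assumes "subring S" "z \<in> S" "\<forall>i. coeff p i \<in> S"
  shows "poly p z \<in> S"
  using assms(3)
proof (induction p rule: pCons_induct)
  case 0 then show ?case using subringD(1)[OF assms(1)] by simp
next
  case (pCons a p)
  then show ?case using coeffs_pCons[OF pCons.prems] assms
    by (auto intro!: subringD)
qed

lemma subring_adjoin: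
  assumes "subring S" shows "subring (adjoin S z)" "S \<subseteq> adjoin S z" "z \<in> adjoin S z"
proof -
  have c: "c \<in> adjoin S z" if "c \<in> S" for c
    unfolding adjoin_def using coeffs_const[OF assms that] by (intro CollectI exI[of _ "[:c:]"]) auto
  show "S \<subseteq> adjoin S z" using c by auto
  show "z \<in> adjoin S z"
    unfolding adjoin_def using coeffs_monom[OF assms subringD(2)[OF assms], of 1]
    by (intro CollectI exI[of _ "monom 1 1"]) (auto simp: poly_monom)
  show "subring (adjoin S z)"
    unfolding subring_def
  proof (intro conjI ballI)
    show "0 \<in> adjoin S z" "1 \<in> adjoin S z" using c subringD[OF assms] by auto
  next
    fix x y assume "x \<in> adjoin S z" "y \<in> adjoin S z"
    then obtain p q where "x = poly p z" "\<forall>i. coeff p i \<in> S" "y = poly q z" "\<forall>i. coeff q i \<in> S"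
      unfolding adjoin_def by auto
    then show "x + y \<in> adjoin S z"
      unfolding adjoin_def
      by (auto intro!: exI[of _ "p + q"] coeffs_add[rule_format] assms)
    show "x * y \<in> adjoin S z"
      unfolding adjoin_def using \<open>x = poly p z\<close> \<open>y = poly q z\<close> \<open>\<forall>i. coeff p i \<in> S\<close> \<open>\<forall>i. coeff q i \<in> S\<close>
      by (intro CollectI exI[of _ "p * q"]) (auto intro!: coeffs_mult[rule_format] assms)
  next
    fix x assume "x \<in> adjoin S z"
    then obtain p where "x = poly p z" "\<forall>i. coeff p i \<in> S"
      unfolding adjoin_def by auto
    then show "- x \<in> adjoin S z"
      unfolding adjoin_def by (auto intro!: exI[of _ "- p"] coeffs_uminus[rule_format] assms)
  qed
qed

lemma subfieldD:
  assumes "subfield S"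
  shows "0 \<in> S" "1 \<in> S" "x \<in> S \<Longrightarrow> y \<in> S \<Longrightarrow> x + y \<in> S"
    "x \<in> S \<Longrightarrow> y \<in> S \<Longrightarrow> x * y \<in> S" "x \<in> S \<Longrightarrow> - x \<in> S"
    "x \<in> S \<Longrightarrow> y \<in> S \<Longrightarrow> x - y \<in> S" "x \<in> S \<Longrightarrow> inverse x \<in> S"
    "x \<in> S \<Longrightarrow> y \<in> S \<Longrightarrow> x / y \<in> S"
proof -
  have A: "0 \<in> S" "1 \<in> S" "\<And>x y. x \<in> S \<Longrightarrow> y \<in> S \<Longrightarrow> x + y \<in> S"
    "\<And>x y. x \<in> S \<Longrightarrow> y \<in> S \<Longrightarrow> x * y \<in> S" "\<And>x. x \<in> S \<Longrightarrow> - x \<in> S"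
    "\<And>x. x \<in> S \<Longrightarrow> x \<noteq> 0 \<Longrightarrow> inverse x \<in> S"
    using assms unfolding subfield_def by blast+
  have I: "\<And>x. x \<in> S \<Longrightarrow> inverse x \<in> S" using A(1,6) by (metis inverse_zero)
  show "0 \<in> S" "1 \<in> S" "x \<in> S \<Longrightarrow> y \<in> S \<Longrightarrow> x + y \<in> S"
    "x \<in> S \<Longrightarrow> y \<in> S \<Longrightarrow> x * y \<in> S" "x \<in> S \<Longrightarrow> - x \<in> S"
    "x \<in> S \<Longrightarrow> inverse x \<in> S" using A I by auto
  show "x \<in> S \<Longrightarrow> y \<in> S \<Longrightarrow> x - y \<in> S" using A(3,5) by (metis diff_conv_add_uminus)
  show "x \<in> S \<Longrightarrow> y \<in> S \<Longrightarrow> x / y \<in> S" using A(4) I by (metis divide_inverse)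
qed

lemma subfield_sum:
  assumes "subfield S" "\<And>i. i \<in> A \<Longrightarrow> f i \<in> S"
  shows "sum f A \<in> S"
  using subring_sum[OF subfield_subring[OF assms(1)]] assms(2) by blast

lemma transc_poly_nz:
  assumes "\<not> algebraic_over F t" "\<forall>i. coeff r i \<in> F" "r \<noteq> 0"
  shows "poly r t \<noteq> 0"
  using assms unfolding algebraic_over_def by blast

lemma rfI: "\<forall>i. coeff p i \<in> F \<Longrightarrow> \<forall>i. coeff r i \<in> F \<Longrightarrow> r \<noteq> 0 \<Longrightarrow> x = poly p t / poly r t
   \<Longrightarrow> x \<in> rat_fun_field F t"
  unfolding rat_fun_field_def by blast

lemma rat_fun_field_subfield:
  assumes F: "subfield F" and t: "\<not> algebraic_over F t"
  shows "subfield (rat_fun_field F t)" "F \<subseteq> rat_fun_field F t" "t \<in> rat_fun_field F t"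
proof -
  have R: "subring F" using F by (rule subfield_subring)
  have one: "\<forall>i. coeff [:1:] i \<in> F" using coeffs_const[OF R subringD(2)[OF R]] .
  have c: "c \<in> rat_fun_field F t" if "c \<in> F" for c
    by (rule rfI[OF coeffs_const[OF R that] one]) auto
  show "F \<subseteq> rat_fun_field F t" using c by auto
  show "t \<in> rat_fun_field F t"
    by (rule rfI[OF coeffs_monom[OF R subringD(2)[OF R], of 1] one]) (auto simp: poly_monom)
  show "subfield (rat_fun_field F t)"
    unfolding subfield_def
  proof (intro conjI ballI impI)
    show "0 \<in> rat_fun_field F t" "1 \<in> rat_fun_field F t" using c subringD[OF R] by auto
  next
    fix x y assume "x \<in> rat_fun_field F t" "y \<in> rat_fun_field F t"
    then obtain p r p' r' where x: "x = poly p t / poly r t" "\<forall>i. coeff p i \<in> F" "\<forall>i. coeff r i \<in> F" "r \<noteq> 0"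
      and y: "y = poly p' t / poly r' t" "\<forall>i. coeff p' i \<in> F" "\<forall>i. coeff r' i \<in> F" "r' \<noteq> 0"
      unfolding rat_fun_field_def by blast
    have nz: "poly r t \<noteq> 0" "poly r' t \<noteq> 0" using transc_poly_nz[OF t] x y by auto
    have "x + y = poly (p * r' + p' * r) t / poly (r * r') t"
      unfolding x(1) y(1) using nz by (simp add: field_simps)
    then show "x + y \<in> rat_fun_field F t"
      by (intro rfI[OF coeffs_add[OF R coeffs_mult[OF R x(2) y(3)] coeffs_mult[OF R y(2) x(3)]]
            coeffs_mult[OF R x(3) y(3)]]) (use x y in auto)
    have "x * y = poly (p * p') t / poly (r * r') t"
      unfolding x(1) y(1) using nz by (simp add: field_simps)
    then show "x * y \<in> rat_fun_field F t"
      by (intro rfI[OF coeffs_mult[OF R x(2) y(2)] coeffs_mult[OF R x(3) y(3)]]) (use x y in auto)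
  next
    fix x assume "x \<in> rat_fun_field F t"
    then obtain p r where x: "x = poly p t / poly r t" "\<forall>i. coeff p i \<in> F" "\<forall>i. coeff r i \<in> F" "r \<noteq> 0"
      unfolding rat_fun_field_def by blast
    show "- x \<in> rat_fun_field F t"
      by (rule rfI[OF coeffs_uminus[OF R x(2)] x(3) x(4)]) (simp add: x(1))
    assume "x \<noteq> 0"
    then have "p \<noteq> 0" using x by auto
    then show "inverse x \<in> rat_fun_field F t"
      by (intro rfI[OF x(3) x(2)]) (auto simp: x(1))
  qed
qed

definition Bd :: "'k::field set \<Rightarrow> 'k \<Rightarrow> 'k \<Rightarrow> nat \<Rightarrow> bool" where
  "Bd V y x n \<longleftrightarrow> (\<exists>p. (\<forall>i. \<exists>b\<in>V. coeff p i = y * b) \<and> (\<forall>i>n. coeff p i = 0) \<and> poly p x = 1)"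

lemma Bd_lower:
  assumes R: "subring V" and yO: "y \<in> V" and U: "\<forall>b\<in>V. \<exists>u\<in>V. u * (1 + y * b) = 1"
    and x: "x \<noteq> 0" and n: "Bd V y x n" and m: "Bd V y (inverse x) m" and mn: "m \<le> n" and n1: "n \<ge> 1"
  shows "Bd V y x (n - 1)"
proof -
  define P where "P = {y * b | b. b \<in> V}"
  have P0: "0 \<in> P" unfolding P_def using subringD(1)[OF R] by (intro CollectI exI[of _ 0]) auto
  have Padd: "a + b \<in> P" if H: "a \<in> P" "b \<in> P" for a b
  proof -
    obtain a' b' where "a = y * a'" "b = y * b'" "a' \<in> V" "b' \<in> V" using H unfolding P_def by auto
    then show ?thesis unfolding P_def using subringD(3)[OF R]
      by (intro CollectI exI[of _ "a' + b'"]) (auto simp: distrib_left)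
  qed
  have Pdiff: "a - b \<in> P" if H: "a \<in> P" "b \<in> P" for a b
  proof -
    obtain a' b' where "a = y * a'" "b = y * b'" "a' \<in> V" "b' \<in> V" using H unfolding P_def by auto
    then show ?thesis unfolding P_def using subringD(6)[OF R]
      by (intro CollectI exI[of _ "a' - b'"]) (auto simp: right_diff_distrib)
  qed
  have Pmul: "c * a \<in> P" if H: "c \<in> V" "a \<in> P" for a c
  proof -
    obtain a' where "a = y * a'" "a' \<in> V" using H unfolding P_def by auto
    then show ?thesis unfolding P_def using subringD(4)[OF R] H(1)
      by (intro CollectI exI[of _ "c * a'"]) (auto simp: ac_simps)
  qed
  have PO: "a \<in> V" if "a \<in> P" for a using that subringD(4)[OF R] yO unfolding P_def by auto
  have BdP: "Bd V y z k \<longleftrightarrow> (\<exists>p. (\<forall>i. coeff p i \<in> P) \<and> (\<forall>i>k. coeff p i = 0) \<and> poly p z = 1)" for z k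
    unfolding Bd_def P_def by blast
  obtain p where p: "\<forall>i. coeff p i \<in> P" "\<forall>i>n. coeff p i = 0" "poly p x = 1" using n BdP by blast
  obtain q where q: "\<forall>i. coeff q i \<in> P" "\<forall>i>m. coeff q i = 0" "poly q (inverse x) = 1" using m BdP by blast
  define m' where "m' = degree q"
  have m'm: "m' \<le> m" unfolding m'_def using q(2) by (intro degree_le) auto
  define b0 where "b0 = coeff q 0"
  have b0P: "b0 \<in> P" using q(1) b0_def by auto
  then obtain \<beta> where \<beta>: "\<beta> \<in> V" "b0 = y * \<beta>" unfolding P_def by auto
  obtain u where u: "u \<in> V" "u * (1 + y * (- \<beta>)) = 1" using U subringD(5)[OF R \<beta>(1)] by blast
  have u1: "u * (1 - b0) = 1" using u(2) \<beta>(2) by simp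
  define Rq where "Rq = reflect_poly q"
  have pRq: "poly Rq x = x ^ m'" unfolding Rq_def m'_def using poly_reflect_poly_nz[OF x, of q] q(3) by simp
  define r where "r = Rq - monom b0 m'"
  have pr: "poly r x = (1 - b0) * x ^ m'" unfolding r_def using pRq by (simp add: poly_monom algebra_simps)
  have cr0: "coeff r i = 0" if "i \<ge> m'" for i
    using that unfolding r_def Rq_def b0_def m'_def by (auto simp: coeff_reflect_poly coeff_monom)
  have crP: "coeff r i \<in> P" for i
    unfolding r_def Rq_def coeff_diff coeff_monom coeff_reflect_poly
    using q(1) P0 b0P Pdiff by auto
  define Z where "Z = smult u (monom 1 (n - m') * r)"
  have pZ: "poly Z x = x ^ n"
  proof -
    have "poly Z x = u * (x ^ (n - m') * poly r x)" unfolding Z_def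
      by (simp add: poly_monom)
    also have "\<dots> = u * (1 - b0) * (x ^ (n - m') * x ^ m')" unfolding pr by (simp add: ac_simps)
    also have "\<dots> = x ^ n" using u1 m'm mn by (simp add: power_add[symmetric])
    finally show ?thesis .
  qed
  have cZ: "coeff Z i = u * (if n - m' \<le> i then coeff r (i - (n - m')) else 0)" for i
    unfolding Z_def by (simp add: coeff_monom_mult)
  have cZP: "coeff Z i \<in> P" for i using cZ[of i] Pmul[OF u(1)] crP P0 by auto
  have cZ0: "coeff Z i = 0" if "i \<ge> n" for i
    using cZ[of i] cr0[of "i - (n - m')"] that m'm mn by auto
  define an where "an = coeff p n"
  define p' where "p' = p - monom an n + smult an Z"
  have "poly p' x = 1" unfolding p'_def using p(3) pZ by (simp add: poly_monom)
  moreover have "coeff p' i \<in> P" for i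
  proof -
    have "coeff p' i = (coeff p i - (if n = i then an else 0)) + an * coeff Z i"
      unfolding p'_def by (simp add: coeff_monom)
    moreover have "an \<in> V" using PO p(1) an_def by auto
    ultimately show ?thesis using p(1) P0 Pdiff Padd Pmul cZP an_def by auto
  qed
  moreover have "coeff p' i = 0" if "i > n - 1" for i
  proof -
    have "i \<ge> n" using that n1 by auto
    then show ?thesis unfolding p'_def using p(2) cZ0 an_def by (auto simp: coeff_monom)
  qed
  ultimately show ?thesis using BdP by blast
qed

lemma Bd_not0:
  assumes "Bd V y x 0" "\<And>b. b \<in> V \<Longrightarrow> y * b \<noteq> 1"
  shows False
proof -
  obtain p where p: "\<forall>i. \<exists>b\<in>V. coeff p i = y * b" "\<forall>i>0. coeff p i = 0" "poly p x = 1"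
    using assms(1) unfolding Bd_def by blast
  have "degree p = 0" using p(2) by (intro antisym degree_le) auto
  then have "poly p x = coeff p 0" by (simp add: poly_altdef)
  then show False using p(1,3) assms(2) by metis
qed

lemma Bd_from_adjoin:
  assumes "inverse y \<in> adjoin V x" "y \<noteq> 0"
  shows "\<exists>n. Bd V y x n"
proof -
  obtain f where f: "inverse y = poly f x" "\<forall>i. coeff f i \<in> V" using assms(1) unfolding adjoin_def by auto
  have yf: "y * poly f x = 1" using f(1) assms(2) by (metis right_inverse)
  have "Bd V y x (degree f)" unfolding Bd_def
    using f yf by (intro exI[of _ "smult y f"]) (auto simp: coeff_eq_0)
  then show ?thesis by blast
qed

lemma exists_valring:
  assumes F: "subfield F" and y0: "y \<noteq> 0" and ny: "inverse y \<notin> adjoin F y"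
  shows "\<exists>V. subring V \<and> F \<subseteq> V \<and> y \<in> V \<and> inverse y \<notin> V \<and> (\<forall>x. x \<noteq> 0 \<longrightarrow> x \<in> V \<or> inverse x \<in> V)"
proof -
  define S where "S = {V. subring V \<and> F \<subseteq> V \<and> y \<in> V \<and> inverse y \<notin> V}"
  have RF: "subring F" using F by (rule subfield_subring)
  have R0: "adjoin F y \<in> S" unfolding S_def using subring_adjoin[OF RF] ny by auto
  have "\<forall>C\<in>chains S. \<exists>U\<in>S. \<forall>X\<in>C. X \<subseteq> U"
  proof
    fix C assume C: "C \<in> chains S"
    show "\<exists>U\<in>S. \<forall>X\<in>C. X \<subseteq> U"
    proof (cases "C = {}")
      case True then show ?thesis using R0 by auto
    next
      case False
      have CS: "C \<subseteq> S" and ch: "\<And>A B. A \<in> C \<Longrightarrow> B \<in> C \<Longrightarrow> A \<subseteq> B \<or> B \<subseteq> A"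
        using C unfolding chains_def chain_subset_def by blast+
      have two: "\<exists>X\<in>C. a \<in> X \<and> b \<in> X" if H: "a \<in> \<Union>C" "b \<in> \<Union>C" for a b
      proof -
        obtain A B where "A \<in> C" "B \<in> C" "a \<in> A" "b \<in> B" using H by auto
        then show ?thesis using ch[of A B] by blast
      qed
      have sub: "subring X" if "X \<in> C" for X using that CS unfolding S_def by auto
      have "subring (\<Union>C)" unfolding subring_def
      proof (intro conjI ballI)
        obtain X where X: "X \<in> C" using False by auto
        show "0 \<in> \<Union>C" "1 \<in> \<Union>C" using subringD(1,2)[OF sub[OF X]] X by auto
      next
        fix a b assume "a \<in> \<Union>C" "b \<in> \<Union>C"
        then obtain X where "X \<in> C" "a \<in> X" "b \<in> X" using two by blast
        then show "a + b \<in> \<Union>C" "a * b \<in> \<Union>C" using subringD(3,4)[OF sub] by blast+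
      next
        fix a assume "a \<in> \<Union>C"
        then show "- a \<in> \<Union>C" using subringD(5)[OF sub] by blast
      qed
      moreover obtain X where X: "X \<in> C" using False by auto
      moreover have "F \<subseteq> \<Union>C" "y \<in> \<Union>C" using CS X unfolding S_def by auto
      moreover have "inverse y \<notin> \<Union>C" using CS unfolding S_def by auto
      ultimately have "\<Union>C \<in> S" unfolding S_def by auto
      then show ?thesis by auto
    qed
  qed
  from Zorn_Lemma2[OF this] obtain V where V: "V \<in> S" and mx: "\<And>X. X \<in> S \<Longrightarrow> V \<subseteq> X \<Longrightarrow> X = V"
    by blast
  have R: "subring V" and FV: "F \<subseteq> V" and yV: "y \<in> V" and iy: "inverse y \<notin> V"
    using V unfolding S_def by auto
  have ny1: "y * b \<noteq> 1" if "b \<in> V" for b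
  proof
    assume "y * b = 1"
    then have "inverse y = b" using y0 by (simp add: field_simps)
    then show False using iy that by simp
  qed
  have nz: "1 + y * b \<noteq> 0" if "b \<in> V" for b
  proof
    assume "1 + y * b = 0"
    then have "y * (- b) = 1" by (simp add: algebra_simps add_eq_0_iff)
    then show False using ny1 subringD(5)[OF R that] by blast
  qed
  have U: "\<forall>b\<in>V. \<exists>u\<in>V. u * (1 + y * b) = 1"
  proof
    fix b assume b: "b \<in> V"
    define V' where "V' = {a / (1 + y * c) | a c. a \<in> V \<and> c \<in> V}"
    have inV': "a / (1 + y * c) \<in> V'" if "a \<in> V" "c \<in> V" for a c
      unfolding V'_def using that by blast
    have VV': "V \<subseteq> V'"
    proof
      fix a assume "a \<in> V" then show "a \<in> V'" using inV'[of a 0] subringD(1)[OF R] by simp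
    qed
    have "subring V'" unfolding subring_def
    proof (intro conjI ballI)
      show "0 \<in> V'" "1 \<in> V'" using VV' subringD(1,2)[OF R] by auto
    next
      fix s t assume "s \<in> V'" "t \<in> V'"
      then obtain a c a' c' where st: "s = a / (1 + y * c)" "t = a' / (1 + y * c')"
        and in': "a \<in> V" "c \<in> V" "a' \<in> V" "c' \<in> V" unfolding V'_def by blast
      have d: "(1 + y * c) * (1 + y * c') = 1 + y * (c + c' + y * c * c')" by (simp add: algebra_simps)
      have e: "c + c' + y * c * c' \<in> V" using in' yV by (intro subringD[OF R]) (auto intro: subringD[OF R])
      have "s + t = (a * (1 + y * c') + a' * (1 + y * c)) / ((1 + y * c) * (1 + y * c'))"
        unfolding st using nz[OF in'(2)] nz[OF in'(4)] by (simp add: field_simps)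
      also have "\<dots> = (a * (1 + y * c') + a' * (1 + y * c)) / (1 + y * (c + c' + y * c * c'))" using d by simp
      finally show "s + t \<in> V'" using e in' yV
        by (metis inV' subringD[OF R])
      have "s * t = (a * a') / ((1 + y * c) * (1 + y * c'))" unfolding st by simp
      also have "\<dots> = (a * a') / (1 + y * (c + c' + y * c * c'))" using d by simp
      finally show "s * t \<in> V'" using e in' by (metis inV' subringD(4)[OF R])
    next
      fix s assume "s \<in> V'"
      then obtain a c where st: "s = a / (1 + y * c)" "a \<in> V" "c \<in> V" unfolding V'_def by blast
      then have "- s = (- a) / (1 + y * c)" by simp
      then show "- s \<in> V'" using st inV' subringD(5)[OF R] by metis
    qed
    moreover have "inverse y \<notin> V'"
    proof
      assume "inverse y \<in> V'"
      then obtain a c where ac: "inverse y = a / (1 + y * c)" "a \<in> V" "c \<in> V" unfolding V'_def by blast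
      then have "1 + y * c = y * a" using nz[OF ac(3)] y0 by (simp add: field_simps)
      then have "y * (a - c) = 1" by (simp add: algebra_simps)
      then show False using ny1 subringD(6)[OF R ac(2,3)] by blast
    qed
    ultimately have "V' \<in> S" using VV' FV yV unfolding S_def by auto
    then have "V' = V" using mx VV' by blast
    then have "1 / (1 + y * b) \<in> V" using inV'[OF subringD(2)[OF R] b] by simp
    then show "\<exists>u\<in>V. u * (1 + y * b) = 1" using nz[OF b] by (intro bexI[of _ "1 / (1 + y * b)"]) auto
  qed
  have adj: "inverse y \<in> adjoin V x" if "x \<notin> V" for x
  proof (rule ccontr)
    assume "inverse y \<notin> adjoin V x"
    then have "adjoin V x \<in> S" using subring_adjoin[OF R, of x] FV yV unfolding S_def by auto
    then have "adjoin V x = V" using mx subring_adjoin(2)[OF R] by blast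
    then show False using subring_adjoin(3)[OF R, of x] that by simp
  qed
  have val: "x \<in> V \<or> inverse x \<in> V" if x0: "x \<noteq> 0" for x
  proof (rule ccontr)
    assume "\<not> (x \<in> V \<or> inverse x \<in> V)"
    then have "x \<notin> V" "inverse x \<notin> V" by auto
    then obtain n0 m0 where "Bd V y x n0" "Bd V y (inverse x) m0"
      using Bd_from_adjoin[OF adj y0] by blast
    define n where "n = (LEAST n. Bd V y x n)"
    define m where "m = (LEAST m. Bd V y (inverse x) m)"
    have n: "Bd V y x n" unfolding n_def by (rule LeastI) fact
    have m: "Bd V y (inverse x) m" unfolding m_def by (rule LeastI) fact
    have n1: "n \<ge> 1" using Bd_not0[of V y x] n ny1 by (cases n) auto
    have m1: "m \<ge> 1" using Bd_not0[of V y "inverse x"] m ny1 by (cases m) auto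
    show False
    proof (cases "m \<le> n")
      case True
      have "Bd V y x (n - 1)" by (rule Bd_lower[OF R yV U x0 n m True n1])
      then have "n \<le> n - 1" unfolding n_def by (rule Least_le)
      then show False using n1 by simp
    next
      case False
      have "Bd V y (inverse x) (m - 1)"
        by (rule Bd_lower[OF R yV U _ m]) (use x0 n False m1 in auto)
      then have "m \<le> m - 1" unfolding m_def by (rule Least_le)
      then show False using m1 by simp
    qed
  qed
  show ?thesis using R FV yV iy val by blast
qed

definition spanL :: "'k::field set \<Rightarrow> 'k set \<Rightarrow> 'k set" where
  "spanL L B = {x. \<exists>c. (\<forall>b\<in>B. c b \<in> L) \<and> x = (\<Sum>b\<in>B. c b * b)}"

lemma spanL_empty: "x \<in> spanL L {} \<Longrightarrow> x = 0"
  unfolding spanL_def by auto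

lemma spanL_insert:
  assumes "finite B" "b \<notin> B" "x \<in> spanL L (insert b B)"
  shows "\<exists>c s. c \<in> L \<and> s \<in> spanL L B \<and> x = c * b + s"
proof -
  obtain f where f: "\<forall>b'\<in>insert b B. f b' \<in> L" "x = (\<Sum>b'\<in>insert b B. f b' * b')"
    using assms(3) unfolding spanL_def by blast
  have "x = f b * b + (\<Sum>b'\<in>B. f b' * b')" using f(2) assms(1,2) by simp
  moreover have "(\<Sum>b'\<in>B. f b' * b') \<in> spanL L B" unfolding spanL_def using f(1) by auto
  ultimately show ?thesis using f(1) by blast
qed

lemma spanL_diff_scale:
  assumes L: "subfield L" and s1: "s1 \<in> spanL L B" and s2: "s2 \<in> spanL L B" and lam: "lam \<in> L"
  shows "s1 - lam * s2 \<in> spanL L B"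
proof -
  obtain c1 where c1: "\<forall>b\<in>B. c1 b \<in> L" "s1 = (\<Sum>b\<in>B. c1 b * b)" using s1 unfolding spanL_def by blast
  obtain c2 where c2: "\<forall>b\<in>B. c2 b \<in> L" "s2 = (\<Sum>b\<in>B. c2 b * b)" using s2 unfolding spanL_def by blast
  have "s1 - lam * s2 = (\<Sum>b\<in>B. (c1 b - lam * c2 b) * b)"
    unfolding c1(2) c2(2) by (simp add: sum_subtractf sum_distrib_left algebra_simps)
  moreover have "\<forall>b\<in>B. c1 b - lam * c2 b \<in> L" using c1 c2 lam subfieldD[OF L] by auto
  ultimately show ?thesis unfolding spanL_def by (intro CollectI exI[of _ "\<lambda>b. c1 b - lam * c2 b"]) auto
qed

lemma steinitz:
  assumes L: "subfield L" and B: "finite B"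
  shows "finite I \<Longrightarrow> card B < card I \<Longrightarrow> \<forall>i\<in>I. a i \<in> spanL L B \<Longrightarrow>
    \<exists>l. (\<forall>i\<in>I. l i \<in> L) \<and> (\<exists>i\<in>I. l i \<noteq> 0) \<and> (\<Sum>i\<in>I. l i * a i) = 0"
  using B
proof (induction B arbitrary: I a rule: finite_induct)
  case empty
  then obtain i0 where i0: "i0 \<in> I" by fastforce
  have a0: "a i = 0" if "i \<in> I" for i using empty.prems(3) that spanL_empty by blast
  show ?case
    by (rule exI[of _ "\<lambda>i. if i = i0 then 1 else 0"]) (use i0 a0 subfieldD[OF L] in auto)
next
  case (insert b B')
  have "\<forall>i\<in>I. \<exists>cs. fst cs \<in> L \<and> snd cs \<in> spanL L B' \<and> a i = fst cs * b + snd cs"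
    using spanL_insert[OF insert.hyps(1,2)] insert.prems(3) by fastforce
  then obtain f where f: "\<forall>i\<in>I. fst (f i) \<in> L \<and> snd (f i) \<in> spanL L B' \<and> a i = fst (f i) * b + snd (f i)"
    by (metis bchoice)
  define c where "c i = fst (f i)" for i
  define s where "s i = snd (f i)" for i
  have cs: "c i \<in> L" "s i \<in> spanL L B'" "a i = c i * b + s i" if "i \<in> I" for i
    using f that unfolding c_def s_def by auto
  have cardB: "card (insert b B') = card B' + 1" using insert.hyps by simp
  show ?case
  proof (cases "\<forall>i\<in>I. c i = 0")
    case True
    have "\<forall>i\<in>I. a i \<in> spanL L B'" using cs True by auto
    moreover have "card B' < card I" using insert.prems(2) cardB by simp
    ultimately show ?thesis using insert.IH[OF insert.prems(1)] by blast
  next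
    case False
    then obtain j where j: "j \<in> I" "c j \<noteq> 0" by blast
    define I' where "I' = I - {j}"
    define a' where "a' i = a i - (c i / c j) * a j" for i
    have a'span: "\<forall>i\<in>I'. a' i \<in> spanL L B'"
    proof
      fix i assume i: "i \<in> I'"
      then have iI: "i \<in> I" unfolding I'_def by auto
      have "a' i = s i - (c i / c j) * s j"
        unfolding a'_def using cs[OF iI] cs[OF j(1)] j(2) by (simp add: field_simps)
      then show "a' i \<in> spanL L B'"
        using spanL_diff_scale[OF L cs(2)[OF iI] cs(2)[OF j(1)] subfieldD(8)[OF L cs(1)[OF iI] cs(1)[OF j(1)]]]
        by simp
    qed
    have fI': "finite I'" using insert.prems(1) unfolding I'_def by auto
    have cI': "card B' < card I'" using insert.prems(1,2) cardB j(1) unfolding I'_def by simp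
    obtain mu where mu: "\<forall>i\<in>I'. mu i \<in> L" "\<exists>i\<in>I'. mu i \<noteq> 0" "(\<Sum>i\<in>I'. mu i * a' i) = 0"
      using insert.IH[OF fI' cI' a'span] by blast
    define K where "K = (\<Sum>k\<in>I'. mu k * (c k / c j))"
    have KL: "K \<in> L" unfolding K_def
      using mu(1) cs(1) j I'_def by (intro subfield_sum[OF L]) (auto intro!: subfieldD[OF L])
    define l where "l i = (if i = j then - K else mu i)" for i
    have "(\<Sum>i\<in>I'. mu i * a' i) = (\<Sum>i\<in>I'. mu i * a i - (mu i * (c i / c j)) * a j)"
      by (intro sum.cong) (simp_all add: a'_def algebra_simps)
    also have "\<dots> = (\<Sum>i\<in>I'. mu i * a i) - K * a j"
      unfolding K_def by (simp add: sum_subtractf sum_distrib_right)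
    finally have "(\<Sum>i\<in>I'. mu i * a' i) = (\<Sum>i\<in>I'. mu i * a i) - K * a j" .
    then have e1: "(\<Sum>i\<in>I'. mu i * a i) = K * a j" using mu(3) by simp
    have "(\<Sum>i\<in>I. l i * a i) = l j * a j + (\<Sum>i\<in>I'. l i * a i)"
      unfolding I'_def using insert.prems(1) j(1) by (simp add: sum.remove)
    also have "(\<Sum>i\<in>I'. l i * a i) = (\<Sum>i\<in>I'. mu i * a i)"
      unfolding l_def I'_def by (intro sum.cong) auto
    finally have "(\<Sum>i\<in>I. l i * a i) = 0" using e1 unfolding l_def by simp
    moreover have "\<forall>i\<in>I. l i \<in> L" unfolding l_def using mu(1) KL subfieldD(5)[OF L] I'_def by auto
    moreover have "\<exists>i\<in>I. l i \<noteq> 0" using mu(2) unfolding l_def I'_def by auto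
    ultimately show ?thesis by blast
  qed
qed

locale vr =
  fixes F :: "'k::field set" and V :: "'k set" and y :: 'k
  assumes F: "subfield F" and R: "subring V" and FV: "F \<subseteq> V" and yV: "y \<in> V"
    and iy: "inverse y \<notin> V" and val: "\<And>x. x \<noteq> 0 \<Longrightarrow> x \<in> V \<or> inverse x \<in> V"
begin

definition unitv :: "'k \<Rightarrow> bool" where "unitv x \<longleftrightarrow> x \<in> V \<and> x \<noteq> 0 \<and> inverse x \<in> V"
definition Mx :: "'k set" where "Mx = {x. x \<in> V \<and> \<not> unitv x}"

lemma y0: "y \<noteq> 0" using iy subringD(1)[OF R] by auto

lemma unit1: "unitv 1" unfolding unitv_def using subringD(2)[OF R] by simp

lemma unit_mult: "unitv a \<Longrightarrow> unitv b \<Longrightarrow> unitv (a * b)"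
  unfolding unitv_def by (auto simp: subringD(4)[OF R] inverse_mult_distrib)

lemma unit_inv: "unitv a \<Longrightarrow> unitv (inverse a)"
  unfolding unitv_def by auto

lemma unit_div: "unitv a \<Longrightarrow> unitv b \<Longrightarrow> unitv (a / b)"
  by (simp add: divide_inverse unit_mult unit_inv)

lemma unit_pow: "unitv a \<Longrightarrow> unitv (a ^ n)"
  by (induction n) (auto simp: unit1 unit_mult)

lemma unit_F: "c \<in> F \<Longrightarrow> c \<noteq> 0 \<Longrightarrow> unitv c"
  unfolding unitv_def using FV subfieldD(7)[OF F] by auto

lemma unit_neg: "unitv a \<Longrightarrow> unitv (- a)"
  unfolding unitv_def using subringD(5)[OF R] by (auto simp: inverse_minus_eq)

lemma M0: "0 \<in> Mx" unfolding Mx_def unitv_def using subringD(1)[OF R] by auto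

lemma MV: "a \<in> Mx \<Longrightarrow> a \<in> V" unfolding Mx_def by auto

lemma M_mult:
  assumes a: "a \<in> Mx" and b: "b \<in> V" shows "a * b \<in> Mx"
proof -
  have ab: "a * b \<in> V" using a b MV subringD(4)[OF R] by auto
  have "\<not> unitv (a * b)"
  proof
    assume u: "unitv (a * b)"
    then have "a \<noteq> 0" "b \<noteq> 0" unfolding unitv_def by auto
    then have eq: "inverse a = b * inverse (a * b)" by (simp add: field_simps)
    have iab: "inverse (a * b) \<in> V" using u unfolding unitv_def by blast
    have "b * inverse (a * b) \<in> V" by (rule subringD(4)[OF R b iab])
    then have "inverse a \<in> V" using eq by metis
    then have "unitv a" using MV[OF a] \<open>a \<noteq> 0\<close> unfolding unitv_def by auto
    then show False using a unfolding Mx_def by auto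
  qed
  then show ?thesis using ab unfolding Mx_def by auto
qed

lemma M_mult': "a \<in> Mx \<Longrightarrow> b \<in> V \<Longrightarrow> b * a \<in> Mx"
  using M_mult by (simp add: mult.commute)

lemma M_neg: "a \<in> Mx \<Longrightarrow> - a \<in> Mx"
  using M_mult[of a "- 1"] subringD(5)[OF R subringD(2)[OF R]] by simp

lemma M_add:
  assumes a: "a \<in> Mx" and b: "b \<in> Mx" shows "a + b \<in> Mx"
proof (cases "a = 0 \<or> b = 0")
  case True then show ?thesis using a b by auto
next
  case False
  then have a0: "a \<noteq> 0" and b0: "b \<noteq> 0" by auto
  have "b / a \<noteq> 0" using a0 b0 by simp
  then consider "b / a \<in> V" | "inverse (b / a) \<in> V" using val by blast
  then show ?thesis
  proof cases
    case 1
    have "a + b = a * (1 + b / a)" using a0 by (simp add: field_simps)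
    moreover have "1 + b / a \<in> V" using 1 subringD(2,3)[OF R] by auto
    ultimately show ?thesis using M_mult[OF a] by simp
  next
    case 2
    have "a + b = b * (1 + a / b)" using b0 by (simp add: field_simps)
    moreover have "1 + a / b \<in> V" using 2 subringD(2,3)[OF R] by auto
    ultimately show ?thesis using M_mult[OF b] by simp
  qed
qed

lemma M_sum: "(\<And>i. i \<in> A \<Longrightarrow> f i \<in> Mx) \<Longrightarrow> sum f A \<in> Mx"
proof (induction A rule: infinite_finite_induct)
  case (infinite A) then show ?case using M0 by simp
next
  case empty then show ?case using M0 by simp
next
  case (insert x A) then show ?case using M_add by simp
qed

lemma unit_not_M: "unitv a \<Longrightarrow> a \<notin> Mx" unfolding Mx_def by auto

lemma unit_add_M:
  assumes u: "unitv u" and m: "m \<in> Mx" shows "unitv (u + m)"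
proof (rule ccontr)
  assume "\<not> unitv (u + m)"
  moreover have "u + m \<in> V" using u m MV subringD(3)[OF R] unfolding unitv_def by auto
  ultimately have "u + m \<in> Mx" unfolding Mx_def by auto
  then have "(u + m) + - m \<in> Mx" using M_add M_neg m by blast
  then show False using u unit_not_M by simp
qed

lemma notV_inv: "a \<noteq> 0 \<Longrightarrow> a \<notin> V \<Longrightarrow> inverse a \<in> Mx"
  using val[of a] unfolding Mx_def unitv_def by auto

lemma M_pow: "a \<in> Mx \<Longrightarrow> k \<ge> 1 \<Longrightarrow> a ^ k \<in> Mx"
proof (induction k)
  case 0 then show ?case by simp
next
  case (Suc k)
  show ?case
  proof (cases "k = 0")
    case True then show ?thesis using Suc by simp
  next
    case False
    then have "a ^ k \<in> Mx" using Suc by simp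
    then show ?thesis using M_mult'[OF _ MV[OF Suc.prems(1)]] by simp
  qed
qed

lemma yM: "y \<in> Mx"
  unfolding Mx_def unitv_def using yV iy by auto

lemma V_pow: "a ^ n \<in> V" if "a \<in> V" for a n
  using subring_power[OF R that] .

lemma pow_V_imp: assumes "a ^ k \<in> V" "k \<ge> 1" shows "a \<in> V"
proof (rule ccontr)
  assume na: "a \<notin> V"
  then have a0: "a \<noteq> 0" using subringD(1)[OF R] by auto
  have "inverse a ^ k \<in> Mx" using M_pow[OF notV_inv[OF a0 na] assms(2)] .
  then have "inverse a ^ k * a ^ k \<in> Mx" using M_mult assms(1) by blast
  moreover have "inverse a ^ k * a ^ k = (inverse a * a) ^ k" by (simp only: power_mult_distrib)
  ultimately have "1 \<in> Mx" using a0 by simp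
  then show False using unit1 unit_not_M by blast
qed

lemma exists_min:
  assumes "finite S" "S \<noteq> {}" "\<forall>i\<in>S. x i \<noteq> 0"
  shows "\<exists>k\<in>S. \<forall>i\<in>S. x i / x k \<in> V"
  using assms
proof (induction S rule: finite_ne_induct)
  case (singleton k) then show ?case using subringD(2)[OF R] by auto
next
  case (insert j S)
  then obtain k where k: "k \<in> S" "\<forall>i\<in>S. x i / x k \<in> V" by auto
  have xj: "x j \<noteq> 0" "x k \<noteq> 0" using insert.prems k(1) by auto
  show ?case
  proof (cases "x j / x k \<in> V")
    case True then show ?thesis using k by auto
  next
    case False
    then have kj: "x k / x j \<in> V" using val[of "x j / x k"] xj by (auto simp: inverse_divide)
    have "x i / x j \<in> V" if "i \<in> S" for i
    proof -
      have e: "x i / x j = (x i / x k) * (x k / x j)" using xj by simp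
      have "(x i / x k) * (x k / x j) \<in> V" by (rule subringD(4)[OF R]) (use k(2) that kj in auto)
      then show ?thesis using e by metis
    qed
    moreover have "x j / x j \<in> V" using xj subringD(2)[OF R] by simp
    ultimately show ?thesis by auto
  qed
qed

definition eqv :: "'k set \<Rightarrow> 'k \<Rightarrow> 'k \<Rightarrow> bool" where
  "eqv L a b \<longleftrightarrow> (\<exists>l u. l \<in> L \<and> l \<noteq> 0 \<and> unitv u \<and> a = l * u * b)"

lemma indep:
  assumes L: "subfield L" and I: "finite I" and a0: "\<forall>i\<in>I. a i \<noteq> 0"
    and ne: "\<forall>i\<in>I. \<forall>j\<in>I. i \<noteq> j \<longrightarrow> \<not> eqv L (a i) (a j)"
    and lL: "\<forall>i\<in>I. l i \<in> L" and s: "(\<Sum>i\<in>I. l i * a i) = 0"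
  shows "\<forall>i\<in>I. l i = 0"
proof (rule ccontr)
  assume "\<not> (\<forall>i\<in>I. l i = 0)"
  define S where "S = {i\<in>I. l i \<noteq> 0}"
  have SI: "S \<subseteq> I" and Sne: "S \<noteq> {}" and fS: "finite S"
    using \<open>\<not> (\<forall>i\<in>I. l i = 0)\<close> I unfolding S_def by auto
  define x where "x i = l i * a i" for i
  have x0: "\<forall>i\<in>S. x i \<noteq> 0" using a0 unfolding S_def x_def by auto
  have sS: "(\<Sum>i\<in>S. x i) = 0"
    using s sum.mono_neutral_right[OF I SI, of x] unfolding x_def S_def by auto
  obtain k where k: "k \<in> S" "\<forall>i\<in>S. x i / x k \<in> V" using exists_min[OF fS Sne x0] by blast
  have inM: "x i / x k \<in> Mx" if i: "i \<in> S - {k}" for i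
  proof -
    have "\<not> unitv (x i / x k)"
    proof
      assume u: "unitv (x i / x k)"
      have li: "l i \<noteq> 0" "l k \<noteq> 0" "l i \<in> L" "l k \<in> L" using i k(1) lL unfolding S_def by auto
      have ak: "a k \<noteq> 0" using a0 k(1) SI by auto
      have "a i = (l k / l i) * (x i / x k) * a k"
        unfolding x_def using ak li(1,2) by (simp add: field_simps)
      moreover have "l k / l i \<in> L" "l k / l i \<noteq> 0" using li subfieldD(8)[OF L] by auto
      ultimately have "eqv L (a i) (a k)" unfolding eqv_def using u by blast
      then show False using ne i k(1) SI by blast
    qed
    then show ?thesis using k(2) i unfolding Mx_def by auto
  qed
  have "(\<Sum>i\<in>S. x i / x k) = 0" using sS by (simp add: sum_divide_distrib[symmetric])
  moreover have "(\<Sum>i\<in>S. x i / x k) = x k / x k + (\<Sum>i\<in>S - {k}. x i / x k)"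
    using fS k(1) by (simp add: sum.remove)
  ultimately have "1 + (\<Sum>i\<in>S - {k}. x i / x k) = 0" using x0 k(1) by simp
  moreover have "unitv (1 + (\<Sum>i\<in>S - {k}. x i / x k))"
    by (rule unit_add_M[OF unit1 M_sum]) (use inM in blast)
  ultimately have "unitv 0" by simp
  then show False unfolding unitv_def by simp
qed

end

locale vrL = vr +
  fixes L :: "'a::field set" and B :: "'a set"
  assumes L: "subfield L" and fB: "finite B" and span: "\<And>x. x \<in> spanL L B"
begin

lemma eqv_sym: assumes "eqv L a b" shows "eqv L b a"
proof -
  obtain l u where lu: "l \<in> L" "l \<noteq> 0" "unitv u" "a = l * u * b" using assms unfolding eqv_def by blast
  have u0: "u \<noteq> 0" using lu(3) unfolding unitv_def by auto
  have "b = inverse l * inverse u * a" using lu(2,4) u0 by (simp add: field_simps)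
  moreover have "inverse l \<in> L" "inverse l \<noteq> 0" using lu(1,2) subfieldD(7)[OF L] by auto
  ultimately show ?thesis unfolding eqv_def using unit_inv[OF lu(3)] by blast
qed

lemma eqv_cancel: assumes "eqv L (c * a) (c * b)" "c \<noteq> 0" shows "eqv L a b"
proof -
  obtain l u where lu: "l \<in> L" "l \<noteq> 0" "unitv u" "c * a = l * u * (c * b)" using assms unfolding eqv_def by blast
  have "a = l * u * b" using lu(4) assms(2) by (simp add: field_simps)
  then show ?thesis unfolding eqv_def using lu by blast
qed

lemma PH:
  assumes a0: "a \<noteq> 0"
  shows "\<exists>k. 1 \<le> k \<and> k \<le> card B \<and> eqv L (a ^ k) 1"
proof (rule ccontr)
  assume H: "\<not> ?thesis"
  define I where "I = {0..card B}"
  have ne: "\<forall>i\<in>I. \<forall>j\<in>I. i \<noteq> j \<longrightarrow> \<not> eqv L (a ^ i) (a ^ j)"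
  proof (intro ballI impI notI)
    fix i j assume i: "i \<in> I" and j: "j \<in> I" and ij: "i \<noteq> j" and e: "eqv L (a ^ i) (a ^ j)"
    show False
    proof (cases "i < j")
      case True
      have "eqv L (a ^ j) (a ^ i)" by (rule eqv_sym[OF e])
      moreover have "a ^ j = a ^ i * a ^ (j - i)" using True by (simp add: power_add[symmetric])
      ultimately have "eqv L (a ^ i * a ^ (j - i)) (a ^ i * 1)" by simp
      then have "eqv L (a ^ (j - i)) 1" by (rule eqv_cancel) (use a0 in simp)
      then show False using H True j unfolding I_def by auto
    next
      case False
      then have ji: "j < i" using ij by simp
      have "a ^ i = a ^ j * a ^ (i - j)" using ji by (simp add: power_add[symmetric])
      then have "eqv L (a ^ j * a ^ (i - j)) (a ^ j * 1)" using e by simp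
      then have "eqv L (a ^ (i - j)) 1" by (rule eqv_cancel) (use a0 in simp)
      then show False using H ji i unfolding I_def by auto
    qed
  qed
  have "finite I" "card B < card I" unfolding I_def by auto
  then obtain l where l: "\<forall>i\<in>I. l i \<in> L" "\<exists>i\<in>I. l i \<noteq> 0" "(\<Sum>i\<in>I. l i * a ^ i) = 0"
    using steinitz[OF L fB, of I "\<lambda>i. a ^ i"] span by blast
  have "\<forall>i\<in>I. l i = 0"
    by (rule indep[OF L \<open>finite I\<close> _ ne l(1) l(3)]) (use a0 in simp)
  then show False using l(2) by blast
qed

definition E :: nat where "E = fact (card B)"

lemma E1: "E \<ge> 1" unfolding E_def by (simp add: fact_ge_1)

lemma E_pow: assumes a0: "a \<noteq> 0" shows "eqv L (a ^ E) 1"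
proof -
  obtain k where k: "1 \<le> k" "k \<le> card B" "eqv L (a ^ k) 1" using PH[OF a0] by blast
  obtain l u where lu: "l \<in> L" "l \<noteq> 0" "unitv u" "a ^ k = l * u * 1" using k(3) unfolding eqv_def by blast
  have "k dvd E" unfolding E_def using k by (simp add: dvd_fact)
  then obtain m where m: "E = k * m" by blast
  have "a ^ E = l ^ m * u ^ m * 1" unfolding m power_mult lu(4) by (simp add: power_mult_distrib)
  moreover have "l ^ m \<in> L" using subring_power[OF subfield_subring[OF L] lu(1)] .
  moreover have "l ^ m \<noteq> 0" using lu(2) by simp
  ultimately show ?thesis unfolding eqv_def using unit_pow[OF lu(3)] by blast
qed

lemma no_trivial:
  assumes "\<forall>l\<in>L. l \<noteq> 0 \<longrightarrow> unitv l"
  shows False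
proof -
  obtain k where k: "1 \<le> k" "eqv L (y ^ k) 1" using PH[OF y0] by blast
  obtain l u where lu: "l \<in> L" "l \<noteq> 0" "unitv u" "y ^ k = l * u * 1" using k(2) unfolding eqv_def by blast
  have "unitv (y ^ k)" using lu assms unit_mult by auto
  moreover have "y ^ k \<in> Mx" using M_pow[OF yM k(1)] .
  ultimately show False using unit_not_M by blast
qed

end

locale vrg = vrL +
  fixes g
  assumes gL: "g \<in> L" and g0: "g \<noteq> 0" and gM: "g \<in> Mx"
    and cyc: "\<And>l. l \<in> L \<Longrightarrow> l \<noteq> 0 \<Longrightarrow> \<exists>i j u. unitv u \<and> l * g ^ j = g ^ i * u"
begin

lemma gV: "g \<in> V" using MV[OF gM] .

lemma gu_uniq:
  assumes u: "unitv u" and u': "unitv u'" and e: "g ^ i * u = g ^ i' * u'"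
  shows "i = i'"
proof -
  have main: False if ii: "i < i'" and uu: "unitv u" "unitv u'" and ee: "g ^ i * u = g ^ i' * u'" for i i' u u'
  proof -
    have "g ^ i * u = g ^ i * (g ^ (i' - i) * u')" using ee ii by (simp add: power_add[symmetric] mult.assoc)
    then have "u = g ^ (i' - i) * u'" using g0 by simp
    moreover have "g ^ (i' - i) * u' \<in> Mx"
      using M_mult[OF M_pow[OF gM] ] uu(2) ii unfolding unitv_def by auto
    ultimately show False using uu(1) unit_not_M by simp
  qed
  show ?thesis
  proof (rule ccontr)
    assume "i \<noteq> i'"
    then consider "i < i'" | "i' < i" by linarith
    then show False
    proof cases
      case 1 show False by (rule main[OF 1 u u' e])
    next
      case 2 show False by (rule main[OF 2 u' u e[symmetric]])
    qed
  qed
qed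

lemma rep_exists:
  assumes a0: "a \<noteq> 0" shows "\<exists>i j u. unitv u \<and> a ^ E * g ^ j = g ^ i * u"
proof -
  obtain l u where lu: "l \<in> L" "l \<noteq> 0" "unitv u" "a ^ E = l * u * 1" using E_pow[OF a0] unfolding eqv_def by blast
  obtain i j u' where c: "unitv u'" "l * g ^ j = g ^ i * u'" using cyc[OF lu(1,2)] by blast
  have "a ^ E * g ^ j = g ^ i * (u' * u)" using lu(4) c(2) by (simp add: ac_simps)
  then show ?thesis using unit_mult[OF c(1) lu(3)] by blast
qed

definition w :: "'a \<Rightarrow> int" where
  "w a = (THE m. \<exists>i j u. unitv u \<and> a ^ E * g ^ j = g ^ i * u \<and> m = int i - int j)"

lemma w_eq:
  assumes u: "unitv u" and e: "a ^ E * g ^ j = g ^ i * u"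
  shows "w a = int i - int j"
  unfolding w_def
proof (rule the_equality)
  show "\<exists>i' j' u'. unitv u' \<and> a ^ E * g ^ j' = g ^ i' * u' \<and> int i - int j = int i' - int j'"
    using u e by blast
next
  fix m assume "\<exists>i' j' u'. unitv u' \<and> a ^ E * g ^ j' = g ^ i' * u' \<and> m = int i' - int j'"
  then obtain i' j' u' where u': "unitv u'" "a ^ E * g ^ j' = g ^ i' * u'" "m = int i' - int j'" by blast
  have "g ^ (i + j') * u = g ^ (i' + j) * u'"
  proof -
    have "g ^ (i + j') * u = (g ^ i * u) * g ^ j'" by (simp add: power_add ac_simps)
    also have "\<dots> = a ^ E * g ^ j * g ^ j'" using e by simp
    also have "\<dots> = (a ^ E * g ^ j') * g ^ j" by (simp add: ac_simps)
    also have "\<dots> = g ^ (i' + j) * u'" using u'(2) by (simp add: power_add ac_simps)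
    finally show ?thesis .
  qed
  then have "i + j' = i' + j" using gu_uniq[OF u u'(1)] by blast
  then show "m = int i - int j" using u'(3) by linarith
qed

lemma w_obtain:
  assumes "a \<noteq> 0"
  obtains i j u where "unitv u" "a ^ E * g ^ j = g ^ i * u" "w a = int i - int j"
  using rep_exists[OF assms] w_eq by blast

lemma w_mult: assumes a0: "a \<noteq> 0" and b0: "b \<noteq> 0" shows "w (a * b) = w a + w b"
proof -
  obtain i j u where 1: "unitv u" "a ^ E * g ^ j = g ^ i * u" "w a = int i - int j" using w_obtain[OF a0] by blast
  obtain i' j' u' where 2: "unitv u'" "b ^ E * g ^ j' = g ^ i' * u'" "w b = int i' - int j'" using w_obtain[OF b0] by blast
  have "(a * b) ^ E * g ^ (j + j') = (a ^ E * g ^ j) * (b ^ E * g ^ j')"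
    by (simp add: power_mult_distrib power_add ac_simps)
  also have "\<dots> = g ^ (i + i') * (u * u')" using 1(2) 2(2) by (simp add: power_add ac_simps)
  finally have "w (a * b) = int (i + i') - int (j + j')" using w_eq unit_mult[OF 1(1) 2(1)] by blast
  then show ?thesis using 1(3) 2(3) by simp
qed

lemma w_one: "w 1 = 0"
  using w_eq[OF unit1, of 1 0 0] by simp

lemma w_inv: assumes "a \<noteq> 0" shows "w (inverse a) = - w a"
  using w_mult[of a "inverse a"] assms w_one by simp

lemma w_nonneg_iff: assumes a0: "a \<noteq> 0" shows "w a \<ge> 0 \<longleftrightarrow> a \<in> V"
proof -
  obtain i j u where 1: "unitv u" "a ^ E * g ^ j = g ^ i * u" "w a = int i - int j" using w_obtain[OF a0] by blast
  show ?thesis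
  proof
    assume "w a \<ge> 0"
    then have ji: "j \<le> i" using 1(3) by simp
    have "g ^ j * (a ^ E) = g ^ j * (g ^ (i - j) * u)"
      using 1(2) ji by (simp add: power_add[symmetric] ac_simps)
    then have "a ^ E = g ^ (i - j) * u" using g0 by simp
    moreover have "g ^ (i - j) * u \<in> V" using V_pow[OF gV] 1(1) subringD(4)[OF R] unfolding unitv_def by auto
    ultimately have "a ^ E \<in> V" by simp
    then show "a \<in> V" using pow_V_imp E1 by blast
  next
    assume aV: "a \<in> V"
    show "w a \<ge> 0"
    proof (rule ccontr)
      assume "\<not> w a \<ge> 0"
      then have ij: "i < j" using 1(3) by simp
      have jj: "g ^ j = g ^ i * g ^ (j - i)" using ij by (simp add: power_add[symmetric])
      have "g ^ i * (a ^ E * g ^ (j - i)) = a ^ E * g ^ j" unfolding jj by (simp add: ac_simps)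
      then have "g ^ i * (a ^ E * g ^ (j - i)) = g ^ i * u" using 1(2) by simp
      then have "a ^ E * g ^ (j - i) = u" using g0 by simp
      moreover have "a ^ E * g ^ (j - i) \<in> Mx"
        using M_mult'[OF M_pow[OF gM] V_pow[OF aV]] ij by auto
      ultimately show False using 1(1) unit_not_M by simp
    qed
  qed
qed

lemma w_unit: assumes "c \<in> V" "c \<noteq> 0" "inverse c \<in> V" shows "w c = 0"
  using w_nonneg_iff[of c] w_nonneg_iff[of "inverse c"] w_inv[of c] assms by simp

lemma w_F: "c \<in> F \<Longrightarrow> c \<noteq> 0 \<Longrightarrow> w c = 0"
  using unit_F[of c] unfolding unitv_def by (auto intro: w_unit)

lemma w_y: "w y > 0"
proof -
  have "w y \<ge> 0" using w_nonneg_iff[OF y0] yV by simp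
  moreover have "w y \<noteq> 0"
  proof
    assume "w y = 0"
    then have "w (inverse y) \<ge> 0" using w_inv[OF y0] by simp
    then show False using w_nonneg_iff[of "inverse y"] y0 iy by simp
  qed
  ultimately show ?thesis by simp
qed

lemma w_add:
  assumes a0: "a \<noteq> 0" and b0: "b \<noteq> 0" and ab0: "a + b \<noteq> 0"
  shows "w (a + b) \<ge> min (w a) (w b)"
proof -
  have main: "w (a + b) \<ge> w a" if le: "w a \<le> w b" and a0: "a \<noteq> 0" and b0: "b \<noteq> 0" and ab0: "a + b \<noteq> 0" for a b
  proof -
    have "w (b / a) = w b - w a" using w_mult[of b "inverse a"] w_inv[OF a0] a0 b0 by (simp add: divide_inverse)
    then have "b / a \<in> V" using w_nonneg_iff[of "b / a"] le a0 b0 by simp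
    then have "1 + b / a \<in> V" using subringD(2,3)[OF R] by auto
    moreover have nz: "1 + b / a \<noteq> 0" using ab0 a0 by (simp add: field_simps)
    ultimately have "w (1 + b / a) \<ge> 0" using w_nonneg_iff by blast
    moreover have "a + b = a * (1 + b / a)" using a0 by (simp add: field_simps)
    ultimately show ?thesis using w_mult[OF a0 nz] by simp
  qed
  show ?thesis
  proof (cases "w a \<le> w b")
    case True then show ?thesis using main[OF True a0 b0 ab0] by simp
  next
    case False then show ?thesis using main[of b a] b0 a0 ab0 by (simp add: add.commute)
  qed
qed

end

context vrg begin

lemma w_pow: "a \<noteq> 0 \<Longrightarrow> w (a ^ n) = int n * w a"
  by (induction n) (auto simp: w_one w_mult algebra_simps)

lemma exists_nu: "\<exists>\<nu>. normalized_dvaluation F \<nu> \<and> \<nu> (inverse y) < 0"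
proof -
  define D where "D = {n::nat. n > 0 \<and> (\<exists>a. a \<noteq> 0 \<and> w a = int n)}"
  have yD: "nat (w y) \<in> D" unfolding D_def using w_y y0 by (intro CollectI conjI exI[of _ y]) auto
  define d where "d = (LEAST n. n \<in> D)"
  have dD: "d \<in> D" unfolding d_def using yD by (rule LeastI)
  then obtain \<pi> where pi: "\<pi> \<noteq> 0" "w \<pi> = int d" and d0: "d > 0" unfolding D_def by blast
  define pw where "pw k = (if k \<ge> 0 then \<pi> ^ nat k else inverse \<pi> ^ nat (- k))" for k :: int
  have pw0: "pw k \<noteq> 0" for k unfolding pw_def using pi(1) by auto
  have wpw: "w (pw k) = k * int d" for k
    unfolding pw_def using pi w_pow[of \<pi>] w_pow[of "inverse \<pi>"] w_inv[of \<pi>] by auto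
  have dvd: "int d dvd w a" if a0: "a \<noteq> 0" for a
  proof -
    define r where "r = w a mod int d"
    define qq where "qq = w a div int d"
    have "w (a * pw (- qq)) = w a - qq * int d" using w_mult[OF a0 pw0] wpw by simp
    also have "\<dots> = r" unfolding r_def qq_def by (simp add: minus_div_mult_eq_mod)
    finally have wr: "w (a * pw (- qq)) = r" .
    have r0: "r \<ge> 0" "r < int d" unfolding r_def using d0 by auto
    have "r = 0"
    proof (rule ccontr)
      assume "r \<noteq> 0"
      then have "nat r \<in> D" unfolding D_def using r0 wr a0 pw0[of "- qq"]
        by (intro CollectI conjI exI[of _ "a * pw (- qq)"]) auto
      then have "d \<le> nat r" unfolding d_def by (rule Least_le)
      then show False using r0 by linarith
    qed
    then show ?thesis unfolding r_def by auto
  qed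
  define \<nu> where "\<nu> x = (if x = 0 then 0 else w x div int d)" for x
  have "normalized_dvaluation F \<nu>"
    unfolding normalized_dvaluation_def
  proof (intro conjI allI impI ballI)
    show "\<nu> 0 = 0" unfolding \<nu>_def by simp
  next
    fix a b :: 'a assume a0: "a \<noteq> 0" and b0: "b \<noteq> 0"
    show "\<nu> (a * b) = \<nu> a + \<nu> b"
      unfolding \<nu>_def using a0 b0 w_mult[OF a0 b0] dvd[OF a0] by (simp add: div_plus_div_distrib_dvd_left)
    assume ab0: "a + b \<noteq> 0"
    have "min (w a) (w b) div int d \<le> w (a + b) div int d"
      by (rule zdiv_mono1) (use w_add[OF a0 b0 ab0] d0 in auto)
    moreover have "min (w a) (w b) div int d = min (w a div int d) (w b div int d)"
    proof (cases "w a \<le> w b")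
      case True
      then have "w a div int d \<le> w b div int d" using d0 by (intro zdiv_mono1) auto
      then show ?thesis using True by (simp add: min_def)
    next
      case False
      then have "w b div int d \<le> w a div int d" using d0 by (intro zdiv_mono1) auto
      then show ?thesis using False by (simp add: min_def)
    qed
    ultimately show "\<nu> (a + b) \<ge> min (\<nu> a) (\<nu> b)" unfolding \<nu>_def using a0 b0 ab0 by simp
  next
    show "surj \<nu>"
    proof (rule surjI)
      fix k :: int
      show "\<nu> (pw k) = k" unfolding \<nu>_def using pw0[of k] wpw[of k] d0 by simp
    qed
  next
    fix c assume "c \<in> F" "c \<noteq> 0"
    then show "\<nu> c = 0" unfolding \<nu>_def using w_F by simp
  qed
  moreover have "\<nu> (inverse y) < 0"
  proof -
    obtain m where m: "w y = int d * m" using dvd[OF y0] by blast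
    have "m > 0" using w_y m d0 by (simp add: zero_less_mult_iff)
    moreover have "- (int d * m) div int d = - m"
    proof -
      have "- (int d * m) = int d * (- m)" by simp
      moreover have "int d * (- m) div int d = - m" using d0 by (intro nonzero_mult_div_cancel_left) simp
      ultimately show ?thesis by metis
    qed
    ultimately show ?thesis unfolding \<nu>_def using y0 w_inv[OF y0] m d0 by simp
  qed
  ultimately show ?thesis by blast
qed

end

lemma div_F:
  assumes F: "subfield F" and p: "\<forall>i. coeff p i \<in> F" "p \<noteq> 0"
  shows "\<forall>i. coeff f i \<in> F \<Longrightarrow> \<exists>h r. (\<forall>i. coeff h i \<in> F) \<and> (\<forall>i. coeff r i \<in> F) \<and> f = p * h + r \<and> (r = 0 \<or> degree r < degree p)"
proof (induction "degree f" arbitrary: f rule: less_induct)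
  case less
  have RF: "subring F" using F by (rule subfield_subring)
  have z: "\<forall>i. coeff (0::'a poly) i \<in> F" using subfieldD(1)[OF F] by simp
  show ?case
  proof (cases "f = 0 \<or> degree f < degree p")
    case True
    then show ?thesis using less.prems z by (intro exI[of _ 0] exI[of _ f]) auto
  next
    case False
    then have f0: "f \<noteq> 0" and dfp: "degree p \<le> degree f" by auto
    define k where "k = degree f - degree p"
    define c where "c = lead_coeff f / lead_coeff p"
    have cF: "c \<in> F" unfolding c_def using less.prems p(1) subfieldD(8)[OF F] by auto
    define X where "X = smult c (monom 1 k * p)"
    define f' where "f' = f - X"
    have cX: "coeff X (degree f) = lead_coeff f"
      unfolding X_def c_def k_def using dfp p(2) by (simp add: coeff_monom_mult)
    have dX: "degree X \<le> degree f"
    proof -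
      have "degree X \<le> degree (monom (1::'a) k * p)" unfolding X_def by (rule degree_smult_le)
      also have "\<dots> \<le> degree (monom (1::'a) k) + degree p" by (rule degree_mult_le)
      also have "\<dots> \<le> degree f" using degree_monom_le[of "1::'a" k] unfolding k_def using dfp by linarith
      finally show ?thesis .
    qed
    have XF: "\<forall>i. coeff X i \<in> F" unfolding X_def
      by (rule coeffs_smult[OF RF cF coeffs_mult[OF RF coeffs_monom[OF RF subfieldD(2)[OF F]] p(1)]])
    have f'F: "\<forall>i. coeff f' i \<in> F" unfolding f'_def by (rule coeffs_diff[OF RF less.prems XF])
    have hX: "X = p * smult c (monom 1 k)" unfolding X_def by (simp add: ac_simps)
    have hF: "\<forall>i. coeff (smult c (monom 1 k)) i \<in> F"
      by (rule coeffs_smult[OF RF cF coeffs_monom[OF RF subfieldD(2)[OF F]]])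
    show ?thesis
    proof (cases "f' = 0")
      case True
      then have "f = p * smult c (monom 1 k) + 0" unfolding f'_def hX by simp
      then show ?thesis using hF z by blast
    next
      case False
      have cf': "coeff f' (degree f) = 0" unfolding f'_def using cX by simp
      have "degree f' \<le> degree f" unfolding f'_def using degree_diff_le_max[of f X] dX by simp
      moreover have "degree f' \<noteq> degree f" using cf' False by (metis leading_coeff_0_iff)
      ultimately have "degree f' < degree f" by simp
      then obtain h r where hr: "\<forall>i. coeff h i \<in> F" "\<forall>i. coeff r i \<in> F" "f' = p * h + r" "r = 0 \<or> degree r < degree p"
        using less.hyps f'F by blast
      have "f = p * (h + smult c (monom 1 k)) + r"
        using hr(3) unfolding f'_def hX by (simp add: algebra_simps)
      moreover have "\<forall>i. coeff (h + smult c (monom 1 k)) i \<in> F" by (rule coeffs_add[OF RF hr(1) hF])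
      ultimately show ?thesis using hr(2,4) by blast
    qed
  qed
qed

context vr begin

lemma poly_M:
  assumes "\<forall>i. coeff p i \<in> V" and x: "x \<in> Mx"
  shows "poly p x - coeff p 0 \<in> Mx"
  using assms(1)
proof (induction p rule: pCons_induct)
  case 0 then show ?case using M0 by simp
next
  case (pCons a p)
  have "\<forall>i. coeff p i \<in> V" using coeffs_pCons[OF pCons.prems] by blast
  then have "poly p x \<in> V" using poly_in_subring[OF R MV[OF x]] by blast
  then show ?case using M_mult[OF x] by simp
qed

end

lemma (in vr) cyc_from_polys:
  assumes t: "\<not> algebraic_over F t" and g0: "g \<noteq> 0"
    and H: "\<And>f. f \<noteq> 0 \<Longrightarrow> \<forall>i. coeff f i \<in> F \<Longrightarrow> \<exists>i j u. unitv u \<and> poly f t * g ^ j = g ^ i * u"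
    and l: "l \<in> rat_fun_field F t" "l \<noteq> 0"
  shows "\<exists>i j u. unitv u \<and> l * g ^ j = g ^ i * u"
proof -
  obtain p r where pr: "l = poly p t / poly r t" "\<forall>i. coeff p i \<in> F" "\<forall>i. coeff r i \<in> F" "r \<noteq> 0"
    using l(1) unfolding rat_fun_field_def by blast
  have p0: "p \<noteq> 0" using pr(1) l(2) by auto
  have rt: "poly r t \<noteq> 0" using transc_poly_nz[OF t pr(3,4)] .
  obtain ip jp up where P: "unitv up" "poly p t * g ^ jp = g ^ ip * up" using H[OF p0 pr(2)] by blast
  obtain ir jr ur where Q: "unitv ur" "poly r t * g ^ jr = g ^ ir * ur" using H[OF pr(4) pr(3)] by blast
  have ur0: "ur \<noteq> 0" using Q(1) unfolding unitv_def by auto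
  have "l * g ^ (jp + ir) * ur = g ^ (ip + jr) * up"
  proof -
    have "l * g ^ (jp + ir) * ur = (poly p t * g ^ jp) * (g ^ ir * ur) / poly r t"
      unfolding pr(1) by (simp add: power_add field_simps)
    also have "\<dots> = (g ^ ip * up) * (poly r t * g ^ jr) / poly r t" unfolding P(2) Q(2)[symmetric] by simp
    also have "\<dots> = g ^ (ip + jr) * up" using rt by (simp add: power_add field_simps)
    finally show ?thesis .
  qed
  then have "l * g ^ (jp + ir) = g ^ (ip + jr) * (up / ur)" using ur0 by (simp add: field_simps)
  then show ?thesis using unit_div[OF P(1) Q(1)] by blast
qed

lemma pole_exists:
  assumes FF: "function_field_over F q" and xF: "x \<notin> F"
  shows "\<exists>\<nu>. normalized_dvaluation F \<nu> \<and> \<nu> x < 0"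
proof -
  have F: "subfield F" and acl: "\<And>z. algebraic_over F z \<Longrightarrow> z \<in> F"
    using FF unfolding function_field_over_def by auto
  obtain t where t: "\<not> algebraic_over F t" and fd: "finite_dim_over (rat_fun_field F t)"
    using FF unfolding function_field_over_def by auto
  define L where "L = rat_fun_field F t"
  have L: "subfield L" "F \<subseteq> L" unfolding L_def using rat_fun_field_subfield[OF F t] by auto
  obtain B where B: "finite B" "\<forall>z. \<exists>c. (\<forall>b\<in>B. c b \<in> L) \<and> z = (\<Sum>b\<in>B. c b * b)"
    using fd unfolding finite_dim_over_def L_def by blast
  have span: "z \<in> spanL L B" for z using B(2) unfolding spanL_def by blast
  have RF: "subring F" using F by (rule subfield_subring)
  have x0: "x \<noteq> 0" using xF subfieldD(1)[OF F] by auto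
  define y where "y = inverse x"
  have y0: "y \<noteq> 0" using x0 y_def by simp
  have iyx: "inverse y = x" unfolding y_def by simp
  have ny: "inverse y \<notin> adjoin F y"
  proof
    assume "inverse y \<in> adjoin F y"
    then obtain p where p: "x = poly p y" "\<forall>i. coeff p i \<in> F" unfolding adjoin_def iyx by blast
    define Q where "Q = pCons (-1) p"
    have "poly Q y = 0" unfolding Q_def using p(1) y_def x0 by simp
    moreover have "Q \<noteq> 0" unfolding Q_def by simp
    moreover have "\<forall>i. coeff Q i \<in> F" unfolding Q_def using p(2) subfieldD(2,5)[OF F]
      by (auto simp: coeff_pCons split: nat.splits)
    ultimately have "algebraic_over F y" unfolding algebraic_over_def by blast
    then have "y \<in> F" by (rule acl)
    then have "x \<in> F" using iyx subfieldD(7)[OF F] by metis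
    then show False using xF by simp
  qed
  obtain V where V: "subring V" "F \<subseteq> V" "y \<in> V" "inverse y \<notin> V" "\<And>z. z \<noteq> 0 \<Longrightarrow> z \<in> V \<or> inverse z \<in> V"
    using exists_valring[OF F y0 ny] by blast
  interpret vr F V y using F V by unfold_locales auto
  interpret vrL F V y L B using L B(1) span by unfold_locales auto
  have key: "\<exists>g. g \<in> L \<and> g \<noteq> 0 \<and> g \<in> Mx \<and> (\<forall>l. l \<in> L \<longrightarrow> l \<noteq> 0 \<longrightarrow> (\<exists>i j u. unitv u \<and> l * g ^ j = g ^ i * u))"
  proof (cases "t \<in> V")
    case False
    have t0: "t \<noteq> 0" using False subringD(1)[OF R] by auto
    define g where "g = inverse t"
    have gM: "g \<in> Mx" unfolding g_def by (rule notV_inv[OF t0 False])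
    have g0: "g \<noteq> 0" unfolding g_def using t0 by simp
    have gL: "g \<in> L" unfolding g_def using rat_fun_field_subfield(3)[OF F t] subfieldD(7)[OF L(1)] L_def by auto
    have H: "\<exists>i j u. unitv u \<and> poly f t * g ^ j = g ^ i * u" if f0: "f \<noteq> 0" and fF: "\<forall>i. coeff f i \<in> F" for f
    proof -
      have "poly (reflect_poly f) g = g ^ degree f * poly f t"
        using poly_reflect_poly_nz[OF g0, of f] unfolding g_def by simp
      moreover have cV: "\<forall>i. coeff (reflect_poly f) i \<in> V"
        using fF FV subringD(1)[OF R] by (auto simp: coeff_reflect_poly)
      have "poly (reflect_poly f) g - lead_coeff f \<in> Mx" using poly_M[OF cV gM] by simp
      moreover have "unitv (lead_coeff f)" using unit_F fF f0 by simp
      ultimately have "unitv (poly f t * g ^ degree f)"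
        using unit_add_M[of "lead_coeff f" "poly (reflect_poly f) g - lead_coeff f"] by (simp add: ac_simps)
      then show ?thesis by (intro exI[of _ 0] exI[of _ "degree f"] exI[of _ "poly f t * g ^ degree f"]) simp
    qed
    show ?thesis using gM g0 gL cyc_from_polys[OF t g0 H] unfolding L_def by blast
  next
    case True
    have pV: "poly f t \<in> V" if "\<forall>i. coeff f i \<in> F" for f
      using poly_in_subring[OF R True] that FV by blast
    show ?thesis
    proof (cases "\<forall>f. f \<noteq> 0 \<and> (\<forall>i. coeff f i \<in> F) \<longrightarrow> unitv (poly f t)")
      case True
      have "\<forall>l\<in>L. l \<noteq> 0 \<longrightarrow> unitv l"
      proof (intro ballI impI)
        fix l assume "l \<in> L" "l \<noteq> 0"
        then obtain p r where pr: "l = poly p t / poly r t" "\<forall>i. coeff p i \<in> F" "\<forall>i. coeff r i \<in> F" "r \<noteq> 0"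
          unfolding L_def rat_fun_field_def by blast
        have "p \<noteq> 0" using pr(1) \<open>l \<noteq> 0\<close> by auto
        then show "unitv l" using True pr unit_div by auto
      qed
      then show ?thesis using no_trivial by blast
    next
      case False
      define P where "P n \<longleftrightarrow> (\<exists>f. f \<noteq> 0 \<and> (\<forall>i. coeff f i \<in> F) \<and> poly f t \<in> Mx \<and> degree f = n)" for n
      obtain f1 where f1: "f1 \<noteq> 0" "\<forall>i. coeff f1 i \<in> F" "\<not> unitv (poly f1 t)" using False by blast
      have "poly f1 t \<in> Mx" using f1 pV unfolding Mx_def by auto
      then have "P (degree f1)" unfolding P_def using f1 by blast
      define n0 where "n0 = (LEAST n. P n)"
      have "P n0" unfolding n0_def by (rule LeastI) fact
      then obtain p0 where p0: "p0 \<noteq> 0" "\<forall>i. coeff p0 i \<in> F" "poly p0 t \<in> Mx" "degree p0 = n0"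
        unfolding P_def by blast
      have minimal: "poly f t \<notin> Mx" if "f \<noteq> 0" "\<forall>i. coeff f i \<in> F" "degree f < n0" for f
      proof
        assume "poly f t \<in> Mx"
        then have "P (degree f)" unfolding P_def using that by blast
        then have "n0 \<le> degree f" unfolding n0_def by (rule Least_le)
        then show False using that by simp
      qed
      define g where "g = poly p0 t"
      have g0: "g \<noteq> 0" unfolding g_def using transc_poly_nz[OF t p0(2,1)] .
      have gM: "g \<in> Mx" unfolding g_def using p0 by simp
      have gL: "g \<in> L" unfolding L_def g_def
        by (rule rfI[OF p0(2) coeffs_const[OF RF subfieldD(2)[OF F]]]) auto
      have dp0: "degree p0 \<ge> 1"
      proof (rule ccontr)
        assume "\<not> degree p0 \<ge> 1"
        then have "degree p0 = 0" by simp
        then have "poly p0 t = coeff p0 0" by (simp add: poly_altdef)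
        moreover have "coeff p0 0 \<noteq> 0" using p0(1) \<open>degree p0 = 0\<close> leading_coeff_0_iff by metis
        ultimately have "unitv (poly p0 t)" using unit_F p0(2) by simp
        then show False using p0(3) unit_not_M by blast
      qed
      have H0: "\<forall>i. coeff f i \<in> F \<Longrightarrow> f \<noteq> 0 \<Longrightarrow> \<exists>k u. unitv u \<and> poly f t = g ^ k * u" for f
      proof (induction "degree f" arbitrary: f rule: less_induct)
        case less
        show ?case
        proof (cases "unitv (poly f t)")
          case True then show ?thesis by (intro exI[of _ 0] exI[of _ "poly f t"]) simp
        next
          case False
          then have fM: "poly f t \<in> Mx" using pV[OF less.prems(1)] unfolding Mx_def by auto
          obtain h r where hr: "\<forall>i. coeff h i \<in> F" "\<forall>i. coeff r i \<in> F" "f = p0 * h + r" "r = 0 \<or> degree r < degree p0"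
            using div_F[OF F p0(2,1) less.prems(1)] by blast
          have r0: "r = 0"
          proof (rule ccontr)
            assume rn: "r \<noteq> 0"
            then have dr: "degree r < n0" using hr(4) p0(4) by simp
            have "poly r t = poly f t - g * poly h t" using hr(3) unfolding g_def by simp
            moreover have "g * poly h t \<in> Mx" using M_mult[OF gM pV[OF hr(1)]] .
            ultimately have "poly r t \<in> Mx" using M_add[OF fM M_neg] by simp
            then show False using minimal[OF rn hr(2) dr] by simp
          qed
          then have fh: "f = p0 * h" using hr(3) by simp
          then have h0: "h \<noteq> 0" using less.prems(2) by auto
          have "degree f = degree p0 + degree h" using fh p0(1) h0 by (simp add: degree_mult_eq)
          then have "degree h < degree f" using dp0 by simp
          then obtain k u where ku: "unitv u" "poly h t = g ^ k * u" using less.hyps hr(1) h0 by blast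
          have "poly f t = g ^ Suc k * u" using fh ku(2) unfolding g_def by simp
          then show ?thesis using ku(1) by blast
        qed
      qed
      have H: "\<exists>i j u. unitv u \<and> poly f t * g ^ j = g ^ i * u" if "f \<noteq> 0" "\<forall>i. coeff f i \<in> F" for f
        using H0[OF that(2,1)] by (metis mult_1_right power_0)
      show ?thesis using gM g0 gL cyc_from_polys[OF t g0 H] unfolding L_def by blast
    qed
  qed
  then obtain g where g: "g \<in> L" "g \<noteq> 0" "g \<in> Mx" "\<And>l. l \<in> L \<Longrightarrow> l \<noteq> 0 \<Longrightarrow> \<exists>i j u. unitv u \<and> l * g ^ j = g ^ i * u"
    by blast
  interpret vrg F V y L B g using g by unfold_locales auto
  show ?thesis using exists_nu iyx by auto
qed

theorem lemma2p1:
  fixes F :: "'k::field set" and q :: nat and \<omega> :: "'k \<Rightarrow> int" and a b c d :: 'k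
  assumes "function_field_over F q"
    and "normalized_dvaluation F \<omega>"
    and "a \<in> R_omega F \<omega> - F" and "b \<in> R_omega F \<omega> - F"
    and "c \<in> R_omega F \<omega> - F" and "d \<in> R_omega F \<omega> - F"
    and "a * d - b * c = 1"
    and "absv \<omega> a \<ge> absv \<omega> b"
  shows "absv \<omega> c \<ge> absv \<omega> d"
proof -
  have F: "subfield F" using assms(1) unfolding function_field_over_def by auto
  have neg: "\<omega> z < 0" if z: "z \<in> R_omega F \<omega> - F" for z
  proof -
    obtain \<nu> where \<nu>: "normalized_dvaluation F \<nu>" "\<nu> z < 0" using pole_exists[OF assms(1)] z by blast
    have "\<nu> = \<omega>"
    proof (rule ccontr)
      assume "\<nu> \<noteq> \<omega>"
      then have "\<nu> z \<ge> 0" using z \<nu>(1) unfolding R_omega_def by auto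
      then show False using \<nu>(2) by simp
    qed
    then show ?thesis using \<nu>(2) by simp
  qed
  have nz: "z \<noteq> 0" if "z \<in> R_omega F \<omega> - F" for z using that subfieldD(1)[OF F] by auto
  have a0: "a \<noteq> 0" and b0: "b \<noteq> 0" and c0: "c \<noteq> 0" and d0: "d \<noteq> 0" using nz assms(3-6) by auto
  have wa: "\<omega> a < 0" and wd: "\<omega> d < 0" using neg assms(3,6) by auto
  have mult: "\<And>x y. x \<noteq> 0 \<Longrightarrow> y \<noteq> 0 \<Longrightarrow> \<omega> (x * y) = \<omega> x + \<omega> y"
    and ultra: "\<And>x y. x \<noteq> 0 \<Longrightarrow> y \<noteq> 0 \<Longrightarrow> x + y \<noteq> 0 \<Longrightarrow> \<omega> (x + y) \<ge> min (\<omega> x) (\<omega> y)"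
    using assms(2) unfolding normalized_dvaluation_def by auto
  have w1: "\<omega> 1 = 0" using mult[of 1 1] by simp
  have key: "\<omega> c \<le> \<omega> d" if ab: "\<omega> a \<le> \<omega> b"
  proof (rule ccontr)
    assume "\<not> \<omega> c \<le> \<omega> d"
    then have "\<omega> (a * d) < \<omega> (b * c)" using mult a0 b0 c0 d0 ab by simp
    moreover have "a * d = 1 + b * c" using assms(7) by (simp add: algebra_simps)
    moreover have "b * c \<noteq> 0" "a * d \<noteq> 0" using a0 b0 c0 d0 by auto
    ultimately have "\<omega> (a * d) \<ge> min 0 (\<omega> (b * c))" using ultra[of 1 "b * c"] w1 by auto
    then have "\<omega> (a * d) \<ge> 0" using \<open>\<omega> (a * d) < \<omega> (b * c)\<close> by linarith
    then show False using mult[OF a0 d0] wa wd by simp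
  qed
  define Q where "Q = real (q_omega \<omega>)"
  have abs: "absv \<omega> z = Q powr (- real_of_int (\<omega> z))" if "z \<noteq> 0" for z
    unfolding absv_def Q_def using that by simp
  have "q_omega \<omega> = 0 \<or> q_omega \<omega> = 1 \<or> q_omega \<omega> > 1" by linarith
  then consider "Q = 0" | "Q = 1" | "Q > 1" unfolding Q_def by fastforce
  then show ?thesis
  proof cases
    case 1 then show ?thesis using abs c0 d0 by simp
  next
    case 2 then show ?thesis using abs c0 d0 by simp
  next
    case 3
    have "Q powr (- real_of_int (\<omega> b)) \<le> Q powr (- real_of_int (\<omega> a))" using assms(8) abs a0 b0 by simp
    then have "\<omega> a \<le> \<omega> b" using 3 by simp
    then have "\<omega> c \<le> \<omega> d" by (rule key)
    then have "Q powr (- real_of_int (\<omega> d)) \<le> Q powr (- real_of_int (\<omega> c))" using 3 by simp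
    then show ?thesis using abs c0 d0 by simp
  qed
qed

end
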